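(* There is an absolute constant $C$ such that for every integer $n\ge 2$ and every $(x_1,\dots,x_n)\in A_n$, $$S_n(x_1,\dots,x_n)\le n^3+Cn^2 .$$
   Context: For an integer $n\ge 2$, $A_n$ is the set of integer vectors $(x_1,\dots,x_n)\in\mathbb{Z}^n$ such that $n\ge x_1\ge x_2\ge\cdots\ge x_n\ge 0$, $\sum_{i=1}^k x_i\le 2n+6k-16$ for every $k\in\{1,\dots,n\}$, and $\sum_{i=1}^n x_i\le 6n-12$. For an integer $m\ge 2$, $S_m:\mathbb{R}^m\to\mathbb{R}$ is defined by $S_m(x_1,\dots,x_m)=\sum_{i=1}^{m-1}\sum_{j=i+1}^{m} x_i x_j^2$. *)

theory Defs
  imports Complex_Main
begin

text \<open>Vectors (x_1,...,x_n) are represented as functions x :: nat => int, using indices 1..n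
  (values outside 1..n are irrelevant).\<close>

definition A_set :: "nat \<Rightarrow> (nat \<Rightarrow> int) set" where
  "A_set n = {x. int n \<ge> x 1
      \<and> (\<forall>i\<in>{1..<n}. x i \<ge> x (Suc i))
      \<and> x n \<ge> 0
      \<and> (\<forall>k\<in>{1..n}. (\<Sum>i=1..k. x i) \<le> 2 * int n + 6 * int k - 16)
      \<and> (\<Sum>i=1..n. x i) \<le> 6 * int n - 12}"

definition S_fun :: "nat \<Rightarrow> (nat \<Rightarrow> real) \<Rightarrow> real" where
  "S_fun m x = (\<Sum>i=1..m-1. \<Sum>j=i+1..m. x i * (x j)^2)"

end

theory Submission
  imports Defs
begin

lemma S_rec:
  "S_fun (Suc (Suc k)) y = S_fun (Suc k) y + y (Suc (Suc k))^2 * (\<Sum>i=1..Suc k. y i)"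
proof -
  have "S_fun (Suc (Suc k)) y = (\<Sum>i=1..Suc k. \<Sum>j=i+1..Suc (Suc k). y i * (y j)^2)"
    by (simp add: S_fun_def)
  also have "\<dots> = (\<Sum>i=1..Suc k. (\<Sum>j=i+1..Suc k. y i * (y j)^2) + y i * y (Suc (Suc k))^2)"
    by (rule sum.cong) auto
  also have "\<dots> = (\<Sum>i=1..Suc k. \<Sum>j=i+1..Suc k. y i * (y j)^2) + y (Suc (Suc k))^2 * (\<Sum>i=1..Suc k. y i)"
    by (simp add: sum.distrib sum_distrib_right[symmetric] mult.commute)
  also have "(\<Sum>i=1..Suc k. \<Sum>j=i+1..Suc k. y i * (y j)^2) = S_fun (Suc k) y"
    by (simp add: S_fun_def)
  finally show ?thesis .
qed

lemma S_one: "S_fun (Suc 0) y = 0" by (simp add: S_fun_def)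

locale seqctx =
  fixes n :: nat and y :: "nat \<Rightarrow> real"
  assumes dec: "\<And>i k. 1 \<le> i \<Longrightarrow> i \<le> k \<Longrightarrow> k \<le> n \<Longrightarrow> y k \<le> y i"
    and nn: "\<And>i. 1 \<le> i \<Longrightarrow> i \<le> n \<Longrightarrow> 0 \<le> y i"
    and pref: "\<And>k. 1 \<le> k \<Longrightarrow> k \<le> n \<Longrightarrow> (\<Sum>i=1..k. y i) \<le> 2 * real n + 6 * real k - 16"
    and tot: "(\<Sum>i=1..n. y i) \<le> 6 * real n - 12"
begin

definition P where "P k = (\<Sum>i=1..k. y i)"

lemma P_Suc: "P (Suc k) = P k + y (Suc k)" by (simp add: P_def)

lemma P_split: "J \<le> m \<Longrightarrow> (\<Sum>j=J+1..m. y j) = P m - P J"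
proof (induction m rule: dec_induct)
  case base then show ?case by simp
next
  case (step m) then show ?case by (simp add: P_Suc)
qed

lemma P_mono: "k \<le> m \<Longrightarrow> m \<le> n \<Longrightarrow> P k \<le> P m"
proof (induction m rule: dec_induct)
  case base then show ?case by simp
next
  case (step m) then show ?case using nn[of "Suc m"] by (simp add: P_Suc)
qed

lemma P_nonneg: "k \<le> n \<Longrightarrow> 0 \<le> P k"
  using P_mono[of 0 k] by (simp add: P_def)

lemma head: "2 \<le> m \<Longrightarrow> m \<le> n \<Longrightarrow> 8 * S_fun m y \<le> (P m)^3"
proof (induction m rule: dec_induct)
  case base
  have e: "S_fun 2 y = y 1 * (y 2)^2"
    using S_rec[of 0 y] by (simp add: S_one numeral_2_eq_2)
  have p: "P 2 = y 1 + y 2" by (simp add: P_def numeral_2_eq_2)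
  have a: "y 2 \<le> y 1" using dec[of 1 2] base by simp
  have b: "0 \<le> y 2" using nn[of 2] base by simp
  have "0 \<le> 4*(y 2)^2*(y 1 - y 2) + 6*y 2*(y 1 - y 2)^2 + (y 1 - y 2)^3"
    using a b by (intro add_nonneg_nonneg mult_nonneg_nonneg) auto
  then show ?case unfolding e p by (simp add: power2_eq_square power3_eq_cube algebra_simps)
next
  case (step m)
  obtain k where k: "m = Suc k" using step(1) by (cases m) auto
  define z where "z = y (Suc m)"
  define Q where "Q = P m"
  have rec: "S_fun (Suc m) y = S_fun m y + z^2 * Q"
    using S_rec[of k y] by (simp add: k z_def Q_def P_def)
  have IH: "8 * S_fun m y \<le> Q^3" using step by (simp add: Q_def)
  have z0: "0 \<le> z" using nn[of "Suc m"] step by (simp add: z_def)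
  have z1: "z \<le> y 1" using dec[of 1 "Suc m"] step by (simp add: z_def)
  have z2: "z \<le> y 2" using dec[of 2 "Suc m"] step by (simp add: z_def)
  have "P 2 \<le> P m" using P_mono[of 2 m] step by simp
  moreover have "P 2 = y 1 + y 2" by (simp add: P_def numeral_2_eq_2)
  ultimately have zq: "2 * z \<le> Q" using z1 z2 by (simp add: Q_def)
  have "0 \<le> z * Q * (3*Q - 5*z) + z^3"
    using z0 zq by (intro add_nonneg_nonneg mult_nonneg_nonneg) auto
  hence "8 * z^2 * Q \<le> (Q + z)^3 - Q^3"
    by (simp add: power2_eq_square power3_eq_cube algebra_simps)
  moreover have "P (Suc m) = Q + z" by (simp add: P_Suc Q_def z_def)
  ultimately show ?case using rec IH by simp
qed

lemma tail1:
  assumes "1 \<le> J" shows "J \<le> m \<Longrightarrow> m \<le> n \<Longrightarrow> S_fun m y \<le> S_fun J y + P n * (\<Sum>j=J+1..m. (y j)^2)"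
proof (induction m rule: dec_induct)
  case base then show ?case by simp
next
  case (step m)
  obtain k where k: "m = Suc k" using step(1) assms by (cases m) auto
  have rec: "S_fun (Suc m) y = S_fun m y + y (Suc m)^2 * P m"
    using S_rec[of k y] by (simp add: k P_def)
  have "P m \<le> P n" using P_mono step by simp
  hence "y (Suc m)^2 * P m \<le> P n * y (Suc m)^2"
    by (simp add: mult.commute mult_right_mono)
  moreover have "P n * (\<Sum>j=J+1..Suc m. (y j)^2) = P n * (\<Sum>j=J+1..m. (y j)^2) + P n * y (Suc m)^2"
    using step(1) by (simp add: algebra_simps)
  ultimately show ?case using rec step by simp
qed

lemma abel:
  assumes J1: "1 \<le> J"
  defines "d \<equiv> 2 * real n + 6 * real J - 16 - P J"
  shows "J + 1 \<le> m \<Longrightarrow> m \<le> n \<Longrightarrow> (\<Sum>j=J+1..m. y j * (y j - 6))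
           \<le> (y (J+1) - y m) * d + y m * (P m - P J - 6 * (real m - real J))"
proof (induction m rule: dec_induct)
  case base then show ?case by (simp add: P_Suc algebra_simps)
next
  case (step m)
  have V: "P m - P J - 6 * (real m - real J) \<le> d"
    using pref[of m] step J1 by (simp add: d_def P_def)
  have w: "y (Suc m) \<le> y m" using dec[of m "Suc m"] step J1 by simp
  have "0 \<le> (y m - y (Suc m)) * (d - (P m - P J - 6 * (real m - real J)))"
    using V w by simp
  then show ?case using step by (simp add: P_Suc algebra_simps)
qed

lemma tail2:
  assumes J1: "1 \<le> J" and Jn: "J + 1 \<le> n"
  shows "(\<Sum>j=J+1..n. (y j)^2) \<le> (2 * real n + 6 * real J - 16 - P J) * y (J+1) + 6 * (P n - P J)"
proof -
  define d where "d = 2 * real n + 6 * real J - 16 - P J"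
  have A: "(\<Sum>j=J+1..n. y j * (y j - 6)) \<le> (y (J+1) - y n) * d + y n * (P n - P J - 6 * (real n - real J))"
    using abel[OF J1 Jn] by (simp add: d_def)
  have V: "P n - P J - 6 * (real n - real J) \<le> d"
    using pref[of n] Jn by (simp add: d_def P_def)
  have "0 \<le> y n" using nn[of n] Jn by simp
  hence "y n * (P n - P J - 6 * (real n - real J)) \<le> y n * d" using V by (simp add: mult_left_mono)
  with A have B: "(\<Sum>j=J+1..n. y j * (y j - 6)) \<le> y (J+1) * d" by (simp add: algebra_simps)
  have "(\<Sum>j=J+1..n. (y j)^2) = (\<Sum>j=J+1..n. y j * (y j - 6)) + 6 * (\<Sum>j=J+1..n. y j)"
    by (simp add: sum_distrib_left sum.distrib[symmetric] power2_eq_square algebra_simps)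
  also have "(\<Sum>j=J+1..n. y j) = P n - P J" using P_split Jn by simp
  finally show ?thesis using B by (simp add: d_def mult.commute)
qed

lemma avg: "1 \<le> k \<Longrightarrow> k \<le> n \<Longrightarrow> real k * y k \<le> P k"
proof -
  assume a: "1 \<le> k" "k \<le> n"
  have "(\<Sum>i=1..k. y k) \<le> (\<Sum>i=1..k. y i)"
    by (rule sum_mono) (use dec a in auto)
  then show ?thesis by (simp add: P_def)
qed

end

lemma (in seqctx) main_bound:
  assumes n2: "2 \<le> n"
  shows "S_fun n y \<le> real n ^ 3 + 2000 * real n ^ 2"
proof (cases "n \<le> 24")
  case True
  have h: "8 * S_fun n y \<le> (P n)^3" using head n2 by simp
  have p0: "0 \<le> P n" using P_nonneg by simp
  have p1: "P n \<le> 6 * real n" using tot by (simp add: P_def)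
  have "(P n)^3 \<le> (6 * real n)^3" by (rule power_mono[OF p1 p0])
  hence "S_fun n y \<le> 27 * real n ^ 3" using h by (simp add: power_mult_distrib)
  also have "27 * real n ^ 3 = 27 * real n * real n ^ 2" by (simp add: power2_eq_square power3_eq_cube)
  also have "\<dots> \<le> 27 * 24 * real n ^ 2" using True by (intro mult_right_mono) auto
  also have "\<dots> \<le> real n ^ 3 + 2000 * real n ^ 2" by simp
  finally show ?thesis .
next
  case False
  hence n25: "25 \<le> n" by simp
  define N where "N = real n"
  define p where "p = P 24"
  define Pn where "Pn = P n"
  define Q where "Q = (\<Sum>j=24+1..n. (y j)^2)"
  define u where "u = y 25"
  define d where "d = 2 * N + 128 - p"
  have N25: "25 \<le> N" using n25 by (simp add: N_def)
  have t1: "S_fun n y \<le> S_fun 24 y + Pn * Q"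
    using tail1[of 24 n] n25 by (simp add: Pn_def Q_def)
  have hd: "8 * S_fun 24 y \<le> p^3" using head[of 24] n25 by (simp add: p_def)
  have p0: "0 \<le> p" using P_nonneg n25 by (simp add: p_def)
  have pE: "p \<le> 2 * N + 128" using pref[of 24] n25 by (simp add: p_def P_def N_def)
  have Pn0: "0 \<le> Pn" using P_nonneg by (simp add: Pn_def)
  have Pn6: "Pn \<le> 6 * N" using tot by (simp add: Pn_def P_def N_def)
  have pPn: "p \<le> Pn" using P_mono[of 24 n] n25 by (simp add: p_def Pn_def)
  have Qb: "Q \<le> d * u + 6 * (Pn - p)"
    using tail2[of 24] n25 by (simp add: Q_def d_def u_def p_def Pn_def N_def add.commute)
  have Q0: "0 \<le> Q" unfolding Q_def by (rule sum_nonneg) simp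
  have u0: "0 \<le> u" using nn[of 25] n25 by (simp add: u_def)
  have ub: "25 * u \<le> 2 * N + 134"
    using avg[of 25] pref[of 25] n25 by (simp add: u_def P_def N_def)
  have d0: "0 \<le> d" using pE by (simp add: d_def)
  have s1: "Pn * Q \<le> 6 * N * Q" using Pn6 Q0 by (simp add: mult_right_mono)
  have s2: "6 * N * Q \<le> 6 * N * (d * u) + 216 * N^2"
  proof -
    have "Q \<le> d * u + 36 * N" using Qb Pn6 p0 by (simp add: right_diff_distrib)
    hence "6 * N * Q \<le> 6 * N * (d * u + 36 * N)" using N25 by (simp add: mult_left_mono)
    thus ?thesis by (simp add: algebra_simps power2_eq_square)
  qed
  have s3: "25 * (d * u) \<le> d * (2 * N + 134)" using ub d0
    by (metis mult.left_commute mult_left_mono)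
  have s4: "p^3 \<le> (2*N+128)^2 * p"
  proof -
    have "p^2 \<le> (2*N+128)^2" using pE p0 by (rule power_mono)
    hence "p^2 * p \<le> (2*N+128)^2 * p" using p0 by (simp add: mult_right_mono)
    thus ?thesis by (simp add: power2_eq_square power3_eq_cube)
  qed
  have s5: "4 * N^2 * d \<le> (2*N+128)^2 * d"
  proof -
    have "4 * N^2 \<le> (2*N+128)^2" using N25 by (simp add: power2_eq_square algebra_simps)
    thus ?thesis using d0 by (simp add: mult_right_mono)
  qed
  have dE: "d \<le> 2 * N + 128" using p0 by (simp add: d_def)
  have s6: "N * d \<le> N * (2*N+128)" using dE N25 by (simp add: mult_left_mono)
  have s7: "6 * N * (d * u) * 25 \<le> 6 * N * (d * (2 * N + 134))"
  proof -
    have "6*N*(25*(d*u)) \<le> 6*N*(d*(2*N+134))" by (rule mult_left_mono[OF s3]) (use N25 in simp)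
    thus ?thesis by (simp add: algebra_simps)
  qed
  define E where "E = 2*N+128"
  have S8: "8 * S_fun n y \<le> E^2 * p + 8 * (6 * N * (d * u)) + 1728 * N^2"
    using t1 hd s1 s2 s4 unfolding E_def by linarith
  have Ep: "E^2 * p = E^3 - E^2 * d" by (simp add: d_def E_def power2_eq_square power3_eq_cube algebra_simps)
  have s7': "25 * (6 * N * (d * u)) \<le> 12 * (N^2 * d) + 804 * (N * d)"
  proof -
    have "6 * N * (d * u) * 25 \<le> 6 * N * (d * (2 * N + 134))" by (rule s7)
    also have "\<dots> = 12 * (N^2 * d) + 804 * (N * d)" by (simp add: power2_eq_square algebra_simps)
    finally show ?thesis by simp
  qed
  have s5': "4 * (N^2 * d) \<le> E^2 * d" using s5 unfolding E_def by simp
  have s6': "N * d \<le> N * E" using s6 unfolding E_def by simp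
  have nd: "0 \<le> N^2 * d" using d0 by simp
  have F1: "200 * S_fun n y \<le> 25 * E^3 + 6432 * (N * E) + 43200 * N^2"
    using S8 Ep s7' s5' s6' nd by linarith
  have E3: "E^3 = 8*N^3 + 1536*N^2 + 98304*N + 2097152"
    by (simp add: E_def power3_eq_cube power2_eq_square algebra_simps)
  have NE: "N * E = 2 * N^2 + 128 * N" by (simp add: E_def power2_eq_square algebra_simps)
  have g1: "25 * N \<le> N^2" using N25 by (simp add: power2_eq_square mult_right_mono)
  have g2: "625 \<le> N^2" using N25 mult_mono[OF N25 N25] by (simp add: power2_eq_square)
  have "200 * S_fun n y \<le> 200 * N^3 + 94464 * N^2 + 3280896 * N + 52428800"
    using F1 E3 NE by linarith
  moreover have "3280896 * N \<le> 131236 * N^2" using g1 N25 by linarith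
  moreover have "52428800 \<le> 83887 * N^2" using g2 by linarith
  ultimately have "200 * S_fun n y \<le> 200 * N^3 + 400000 * N^2"
    using g2 by linarith
  hence "200 * S_fun n y \<le> 200 * (N^3 + 2000 * N^2)" by (simp add: algebra_simps)
  thus ?thesis by (simp add: N_def)
qed

theorem theorem5:
  shows "\<exists>C::real. \<forall>n::nat. \<forall>x. n \<ge> 2 \<longrightarrow> x \<in> A_set n \<longrightarrow>
           S_fun n (\<lambda>i. real_of_int (x i)) \<le> real n ^ 3 + C * real n ^ 2"
proof (intro exI allI impI)
  fix n :: nat and x :: "nat \<Rightarrow> int"
  assume n2: "n \<ge> 2" and xA: "x \<in> A_set n"
  from xA have step: "\<forall>i\<in>{1..<n}. x (Suc i) \<le> x i" and xn: "0 \<le> x n"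
    and pr: "\<forall>k\<in>{1..n}. (\<Sum>i=1..k. x i) \<le> 2 * int n + 6 * int k - 16"
    and tt: "(\<Sum>i=1..n. x i) \<le> 6 * int n - 12"
    by (auto simp: A_set_def)
  have dec: "x k \<le> x i" if "1 \<le> i" "i \<le> k" "k \<le> n" for i k
    using that(2,3)
  proof (induction k rule: dec_induct)
    case base then show ?case by simp
  next
    case (step k) then show ?case using \<open>1 \<le> i\<close> \<open>\<forall>i\<in>{1..<n}. x (Suc i) \<le> x i\<close>
      by (metis atLeastLessThan_iff Suc_le_lessD dual_order.trans le_trans less_imp_le_nat order_trans)
  qed
  interpret seqctx n "\<lambda>i. real_of_int (x i)"
  proof
    fix i k :: nat assume "1 \<le> i" "i \<le> k" "k \<le> n"
    then show "real_of_int (x k) \<le> real_of_int (x i)" using dec by simp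
  next
    fix i :: nat assume "1 \<le> i" "i \<le> n"
    then show "0 \<le> real_of_int (x i)" using dec[of i n] xn by simp
  next
    fix k :: nat assume k: "1 \<le> k" "k \<le> n"
    have "(\<Sum>i=1..k. x i) \<le> 2 * int n + 6 * int k - 16" using pr k by auto
    hence "real_of_int (\<Sum>i=1..k. x i) \<le> real_of_int (2 * int n + 6 * int k - 16)"
      by (simp only: of_int_le_iff)
    then show "(\<Sum>i=1..k. real_of_int (x i)) \<le> 2 * real n + 6 * real k - 16" by simp
  next
    have "real_of_int (\<Sum>i=1..n. x i) \<le> real_of_int (6 * int n - 12)"
      using tt by (simp only: of_int_le_iff)
    then show "(\<Sum>i=1..n. real_of_int (x i)) \<le> 6 * real n - 12" by simp
  qed
  show "S_fun n (\<lambda>i. real_of_int (x i)) \<le> real n ^ 3 + 2000 * real n ^ 2"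
    using main_bound n2 by simp
qed

end
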